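(* Let $n\ge1$. Let $\mathscr{R}_n$ be the lattice, ordered by inclusion, of all sets $\Gamma$ of relations on $[n]=\{1,\dots,n\}$ that are closed under $\{\exists,\forall,\wedge,\vee\}$-FO-definability, and let $\mathscr{F}_n$ be the lattice, ordered by inclusion, of all down-shop-monoids on $[n]$. Then $\mathscr{R}_n$ and $\mathscr{F}_n$ are isomorphic, and the operators $\mathrm{Inv}$ and $\mathrm{shE}$ induce isomorphisms between them.
   Context: $\{\exists,\forall,\wedge,\vee\}$-FO is positive first-order logic without equality. A set $\Gamma$ of relations on $[n]$ is closed under $\{\exists,\forall,\wedge,\vee\}$-FO-definability if every relation definable by a formula of that logic over the structure $([n];\Gamma)$ (with $\Gamma$ as a possibly countably infinite signature) already belongs to $\Gamma$. A multipermutation on $[n]$ is a map $f:[n]\to\mathcal{P}([n])\setminus\{\emptyset\}$ such that every $y$ lies in some $f(x)$. $f$ preserves $R\subseteq[n]^i$ if $(x_1,\dots,x_i)\in R$ and $y_j\in f(x_j)$ imply $(y_1,\dots,y_i)\in R$. $\mathrm{Inv}(F)$ is the set of relations preserved by all $f\in F$; $\mathrm{shE}(\Gamma)$ is the set of multipermutations preserving all relations in $\Gamma$. Composition $g\circ f$ is $x\mapsto\{z:\exists y\,(y\in f(x)\wedge z\in g(y))\}$, $f$ is a sub-multipermutation of $g$ if $f(x)\subseteq g(x)$ for all $x$; a down-shop-monoid (DSM) is a set of multipermutations containing the identity $x\mapsto\{x\}$ and closed under composition and under sub-multipermutations that are multipermutations. *)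

theory Defs
  imports Main
begin

text \<open>The domain is [n] = {1..n}. A relation on [n] is an arity-tagged set of tuples:
  a pair (i, R) with R a set of lists of length i over {1..n}.\<close>

type_synonym rel = "nat \<times> nat list set"

definition is_rel :: "nat \<Rightarrow> rel \<Rightarrow> bool" where
  "is_rel n r \<longleftrightarrow> (\<forall>t \<in> snd r. length t = fst r \<and> set t \<subseteq> {1..n})"

text \<open>Formulas of positive first-order logic without equality over a signature of relations
  (atoms name a relation directly); Top and Bot are the truth constants.\<close>

datatype fm =
    Top
  | Bot
  | Atom rel "nat list"
  | Conj fm fm
  | Disj fm fm
  | Ex nat fm
  | All nat fm

fun fv :: "fm \<Rightarrow> nat set" where
  "fv Top = {}"
| "fv Bot = {}"
| "fv (Atom r vs) = set vs"
| "fv (Conj a b) = fv a \<union> fv b"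
| "fv (Disj a b) = fv a \<union> fv b"
| "fv (Ex x a) = fv a - {x}"
| "fv (All x a) = fv a - {x}"

fun atoms_in :: "rel set \<Rightarrow> fm \<Rightarrow> bool" where
  "atoms_in G Top = True"
| "atoms_in G Bot = True"
| "atoms_in G (Atom r vs) = (r \<in> G \<and> length vs = fst r)"
| "atoms_in G (Conj a b) = (atoms_in G a \<and> atoms_in G b)"
| "atoms_in G (Disj a b) = (atoms_in G a \<and> atoms_in G b)"
| "atoms_in G (Ex x a) = atoms_in G a"
| "atoms_in G (All x a) = atoms_in G a"

fun sat :: "nat \<Rightarrow> fm \<Rightarrow> (nat \<Rightarrow> nat) \<Rightarrow> bool" where
  "sat n Top s = True"
| "sat n Bot s = False"
| "sat n (Atom r vs) s = (map s vs \<in> snd r)"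
| "sat n (Conj a b) s = (sat n a s \<and> sat n b s)"
| "sat n (Disj a b) s = (sat n a s \<or> sat n b s)"
| "sat n (Ex x a) s = (\<exists>v \<in> {1..n}. sat n a (s(x := v)))"
| "sat n (All x a) s = (\<forall>v \<in> {1..n}. sat n a (s(x := v)))"

definition asg :: "nat list \<Rightarrow> nat list \<Rightarrow> nat \<Rightarrow> nat" where
  "asg xs t = (\<lambda>v. case map_of (zip xs t) v of Some a \<Rightarrow> a | None \<Rightarrow> 1)"

definition definable :: "nat \<Rightarrow> rel set \<Rightarrow> rel \<Rightarrow> bool" where
  "definable n G r \<longleftrightarrow>
     (\<exists>\<phi> xs. distinct xs \<and> fv \<phi> \<subseteq> set xs \<and> atoms_in G \<phi> \<and> length xs = fst r \<and>
        snd r = {t. length t = length xs \<and> set t \<subseteq> {1..n} \<and> sat n \<phi> (asg xs t)})"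

definition fo_closed :: "nat \<Rightarrow> rel set \<Rightarrow> bool" where
  "fo_closed n G \<longleftrightarrow> (\<forall>r \<in> G. is_rel n r) \<and> (\<forall>r. definable n G r \<longrightarrow> r \<in> G)"

definition multiperm :: "nat \<Rightarrow> (nat \<Rightarrow> nat set) \<Rightarrow> bool" where
  "multiperm n f \<longleftrightarrow>
     (\<forall>x \<in> {1..n}. f x \<noteq> {} \<and> f x \<subseteq> {1..n}) \<and> (\<forall>x. x \<notin> {1..n} \<longrightarrow> f x = {}) \<and>
     (\<forall>y \<in> {1..n}. \<exists>x \<in> {1..n}. y \<in> f x)"

definition preserves :: "(nat \<Rightarrow> nat set) \<Rightarrow> rel \<Rightarrow> bool" where
  "preserves f r \<longleftrightarrow>
     (\<forall>t \<in> snd r. \<forall>u. list_all2 (\<lambda>y x. y \<in> f x) u t \<longrightarrow> u \<in> snd r)"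

definition Inv :: "nat \<Rightarrow> (nat \<Rightarrow> nat set) set \<Rightarrow> rel set" where
  "Inv n F = {r. is_rel n r \<and> (\<forall>f \<in> F. preserves f r)}"

definition shE :: "nat \<Rightarrow> rel set \<Rightarrow> (nat \<Rightarrow> nat set) set" where
  "shE n G = {f. multiperm n f \<and> (\<forall>r \<in> G. preserves f r)}"

definition mcomp :: "(nat \<Rightarrow> nat set) \<Rightarrow> (nat \<Rightarrow> nat set) \<Rightarrow> nat \<Rightarrow> nat set" where
  "mcomp g f = (\<lambda>x. {z. \<exists>y. y \<in> f x \<and> z \<in> g y})"

definition mid :: "nat \<Rightarrow> nat \<Rightarrow> nat set" where
  "mid n = (\<lambda>x. if x \<in> {1..n} then {x} else {})"

definition DSM :: "nat \<Rightarrow> (nat \<Rightarrow> nat set) set \<Rightarrow> bool" where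
  "DSM n M \<longleftrightarrow>
     (\<forall>f \<in> M. multiperm n f) \<and> mid n \<in> M \<and>
     (\<forall>f \<in> M. \<forall>g \<in> M. mcomp g f \<in> M) \<and>
     (\<forall>g \<in> M. \<forall>f. multiperm n f \<and> (\<forall>x. f x \<subseteq> g x) \<longrightarrow> f \<in> M)"

end

theory Submission
  imports Defs
begin


fun upd_list :: "(nat \<Rightarrow> nat) \<Rightarrow> nat list \<Rightarrow> nat list \<Rightarrow> nat \<Rightarrow> nat" where
  "upd_list s (v#vs) (x#xs) = upd_list (s(v:=x)) vs xs"
| "upd_list s _ _ = s"

lemma upd_list_out: "v \<notin> set vs \<Longrightarrow> upd_list s vs t v = s v"
  by (induction s vs t rule: upd_list.induct) auto

lemma upd_list_map: "distinct vs \<Longrightarrow> length t = length vs \<Longrightarrow> map (upd_list s vs t) vs = t"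
proof (induction vs arbitrary: s t)
  case Nil then show ?case by simp
next
  case (Cons v vs)
  then obtain x t' where t: "t = x # t'" by (cases t) auto
  have "upd_list (s(v:=x)) vs t' v = x" using Cons.prems by (simp add: upd_list_out)
  then show ?case using Cons t by simp
qed

lemma sat_Alls: "sat n (foldr All vs \<phi>) s \<longleftrightarrow>
   (\<forall>t. length t = length vs \<and> set t \<subseteq> {1..n} \<longrightarrow> sat n \<phi> (upd_list s vs t))"
proof (induction vs arbitrary: s)
  case Nil then show ?case by simp
next
  case (Cons v vs)
  show ?case
  proof
    assume L: "sat n (foldr All (v # vs) \<phi>) s"
    show "\<forall>t. length t = length (v#vs) \<and> set t \<subseteq> {1..n} \<longrightarrow> sat n \<phi> (upd_list s (v#vs) t)"
    proof (intro allI impI)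
      fix t assume "length t = length (v#vs) \<and> set t \<subseteq> {1..n}"
      then obtain x t' where t: "t = x # t'" "length t' = length vs" "set t' \<subseteq> {1..n}" "x \<in> {1..n}"
        by (cases t) auto
      have "sat n (foldr All vs \<phi>) (s(v:=x))" using L t(4) by simp
      then have "sat n \<phi> (upd_list (s(v:=x)) vs t')" using Cons.IH[of "s(v:=x)"] t by blast
      then show "sat n \<phi> (upd_list s (v#vs) t)" using t by simp
    qed
  next
    assume R: "\<forall>t. length t = length (v#vs) \<and> set t \<subseteq> {1..n} \<longrightarrow> sat n \<phi> (upd_list s (v#vs) t)"
    show "sat n (foldr All (v # vs) \<phi>) s"
    proof (simp only: foldr.simps o_apply sat.simps, intro ballI)
      fix x assume x: "x \<in> {1..n}"
      show "sat n (foldr All vs \<phi>) (s(v := x))"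
        unfolding Cons.IH
      proof (intro allI impI)
        fix t' assume "length t' = length vs \<and> set t' \<subseteq> {1..n}"
        then show "sat n \<phi> (upd_list (s(v := x)) vs t')" using R[rule_format, of "x#t'"] x by auto
      qed
    qed
  qed
qed

lemma sat_Exs: "sat n (foldr Ex vs \<phi>) s \<longleftrightarrow>
   (\<exists>t. length t = length vs \<and> set t \<subseteq> {1..n} \<and> sat n \<phi> (upd_list s vs t))"
proof (induction vs arbitrary: s)
  case Nil then show ?case by simp
next
  case (Cons v vs)
  show ?case
  proof
    assume "sat n (foldr Ex (v # vs) \<phi>) s"
    then obtain x where x: "x \<in> {1..n}" "sat n (foldr Ex vs \<phi>) (s(v := x))" by auto
    then obtain t' where "length t' = length vs \<and> set t' \<subseteq> {1..n} \<and> sat n \<phi> (upd_list (s(v:=x)) vs t')"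
      using Cons.IH by blast
    then show "\<exists>t. length t = length (v#vs) \<and> set t \<subseteq> {1..n} \<and> sat n \<phi> (upd_list s (v#vs) t)"
      using x by (intro exI[of _ "x#t'"]) auto
  next
    assume "\<exists>t. length t = length (v#vs) \<and> set t \<subseteq> {1..n} \<and> sat n \<phi> (upd_list s (v#vs) t)"
    then obtain t where t: "length t = length (v#vs)" "set t \<subseteq> {1..n}" "sat n \<phi> (upd_list s (v#vs) t)" by blast
    then obtain x t' where xt: "t = x # t'" by (cases t) auto
    have "sat n (foldr Ex vs \<phi>) (s(v:=x))" unfolding Cons.IH using t xt by auto
    moreover have "x \<in> {1..n}" using t xt by auto
    ultimately show "sat n (foldr Ex (v # vs) \<phi>) s" by (simp only: foldr.simps o_apply sat.simps) blast
  qed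
qed

definition bigOr :: "fm list \<Rightarrow> fm" where "bigOr l = foldr Disj l Bot"

lemma sat_bigOr: "sat n (bigOr l) s \<longleftrightarrow> (\<exists>\<phi>\<in>set l. sat n \<phi> s)"
  unfolding bigOr_def by (induction l) auto

lemma fv_bigOr: "fv (bigOr l) = (\<Union>\<phi>\<in>set l. fv \<phi>)"
  unfolding bigOr_def by (induction l) auto

lemma atoms_bigOr: "atoms_in G (bigOr l) \<longleftrightarrow> (\<forall>\<phi>\<in>set l. atoms_in G \<phi>)"
  unfolding bigOr_def by (induction l) auto

lemma fv_Alls: "fv (foldr All vs \<phi>) = fv \<phi> - set vs"
  by (induction vs) auto
lemma fv_Exs: "fv (foldr Ex vs \<phi>) = fv \<phi> - set vs"
  by (induction vs) auto
lemma atoms_Alls: "atoms_in G (foldr All vs \<phi>) = atoms_in G \<phi>"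
  by (induction vs) auto
lemma atoms_Exs: "atoms_in G (foldr Ex vs \<phi>) = atoms_in G \<phi>"
  by (induction vs) auto

lemma asg_nth: "distinct xs \<Longrightarrow> length t = length xs \<Longrightarrow> j < length xs \<Longrightarrow> asg xs t (xs!j) = t!j"
  unfolding asg_def by (simp add: map_of_zip_nth)

lemma asg_upt: "length t = N \<Longrightarrow> p < N \<Longrightarrow> asg [0..<N] t p = t!p"
  using asg_nth[of "[0..<N]" t p] by simp

lemma map_asg: "distinct xs \<Longrightarrow> length t = length xs \<Longrightarrow> map (asg xs t) xs = t"
  by (simp add: list_eq_iff_nth_eq asg_nth)

lemma map_asg_upt: "length t = N \<Longrightarrow> map (asg [0..<N] t) [0..<N] = t"
  using map_asg[of "[0..<N]" t] by simp


lemma pres_sat: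
  assumes mp: "multiperm n f" and pr: "\<forall>r\<in>G. preserves f r"
  shows "atoms_in G \<phi> \<Longrightarrow> (\<forall>v\<in>fv \<phi>. s' v \<in> f (s v)) \<Longrightarrow> sat n \<phi> s \<Longrightarrow> sat n \<phi> s'"
proof (induction \<phi> arbitrary: s s')
  case (Atom r vs)
  have "list_all2 (\<lambda>y x. y \<in> f x) (map s' vs) (map s vs)"
    using Atom.prems(2) by (auto simp: list_all2_conv_all_nth)
  then show ?case using Atom.prems pr unfolding preserves_def by auto
next
  case (Ex x \<phi>)
  then obtain v where v: "v \<in> {1..n}" "sat n \<phi> (s(x:=v))" by auto
  then obtain w where w: "w \<in> f v" using mp unfolding multiperm_def by blast
  then have "w \<in> {1..n}" using mp v unfolding multiperm_def by blast
  moreover have "\<forall>v'\<in>fv \<phi>. (s'(x:=w)) v' \<in> f ((s(x:=v)) v')" using Ex.prems w by auto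
  then have "sat n \<phi> (s'(x:=w))"
    using Ex.IH[where s="s(x:=v)" and s'="s'(x:=w)"] Ex.prems v by (simp add: fun_upd_def)
  ultimately show ?case by auto
next
  case (All x \<phi>)
  show ?case
  proof (simp only: sat.simps, intro ballI)
    fix w assume w: "w \<in> {1..n}"
    then obtain v where v: "v \<in> {1..n}" "w \<in> f v" using mp unfolding multiperm_def by blast
    have "sat n \<phi> (s(x:=v))" using All.prems v by auto
    moreover have "\<forall>v'\<in>fv \<phi>. (s'(x:=w)) v' \<in> f ((s(x:=v)) v')" using All.prems v by auto
    ultimately show "sat n \<phi> (s'(x:=w))"
      using All.IH[where s="s(x:=v)" and s'="s'(x:=w)"] All.prems by (simp add: fun_upd_def)
  qed
next
  case (Conj a b)
  have "sat n a s'" using Conj.IH(1)[where s=s and s'=s'] Conj.prems by auto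
  moreover have "sat n b s'" using Conj.IH(2)[where s=s and s'=s'] Conj.prems by auto
  ultimately show ?case by simp
next
  case (Disj a b)
  show ?case
  proof (cases "sat n a s")
    case True then show ?thesis using Disj.IH(1)[where s=s and s'=s'] Disj.prems by auto
  next
    case False then show ?thesis using Disj.IH(2)[where s=s and s'=s'] Disj.prems by auto
  qed
qed auto

lemma Inv_fo_closed:
  assumes "\<forall>f\<in>F. multiperm n f"
  shows "fo_closed n (Inv n F)"
  unfolding fo_closed_def
proof (intro conjI ballI allI impI)
  fix r assume "r \<in> Inv n F" then show "is_rel n r" unfolding Inv_def by auto
next
  fix r assume "definable n (Inv n F) r"
  then obtain \<phi> xs where d: "distinct xs" "fv \<phi> \<subseteq> set xs" "atoms_in (Inv n F) \<phi>" "length xs = fst r"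
     and R: "snd r = {t. length t = length xs \<and> set t \<subseteq> {1..n} \<and> sat n \<phi> (asg xs t)}"
    unfolding definable_def by blast
  have isr: "is_rel n r" unfolding is_rel_def R using d by auto
  have "preserves f r" if f: "f \<in> F" for f
    unfolding preserves_def
  proof (intro ballI allI impI)
    fix t u assume t: "t \<in> snd r" and u: "list_all2 (\<lambda>y x. y \<in> f x) u t"
    have mp: "multiperm n f" using assms f by blast
    have lt: "length t = length xs" "set t \<subseteq> {1..n}" "sat n \<phi> (asg xs t)" using t R by auto
    have lu: "length u = length xs" using u lt by (simp add: list_all2_lengthD)
    have uj: "\<forall>j<length xs. u!j \<in> f (t!j)" using u lt by (simp add: list_all2_conv_all_nth)
    have "set u \<subseteq> {1..n}"
    proof
      fix y assume "y \<in> set u"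
      then obtain j where j: "j < length xs" "y = u!j" using lu by (auto simp: in_set_conv_nth)
      have "t!j \<in> set t" using lt j by simp
      then have "t!j \<in> {1..n}" using lt by blast
      then show "y \<in> {1..n}" using uj j mp unfolding multiperm_def by blast
    qed
    moreover have "sat n \<phi> (asg xs u)"
    proof (rule pres_sat[OF mp _ d(3) _ lt(3)])
      show "\<forall>r\<in>Inv n F. preserves f r" using f unfolding Inv_def by auto
      show "\<forall>v\<in>fv \<phi>. asg xs u v \<in> f (asg xs t v)"
      proof
        fix v assume "v \<in> fv \<phi>"
        then obtain j where j: "j < length xs" "v = xs!j" using d(2) by (metis in_set_conv_nth subsetD)
        then show "asg xs u v \<in> f (asg xs t v)" using asg_nth[OF d(1)] lu lt uj by auto
      qed
    qed
    ultimately show "u \<in> snd r" using R lu by auto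
  qed
  then show "r \<in> Inv n F" unfolding Inv_def using isr by auto
qed

lemma mcomp_split:
  "list_all2 (\<lambda>z x. z \<in> mcomp g f x) u t \<Longrightarrow>
   \<exists>w. list_all2 (\<lambda>y x. y \<in> f x) w t \<and> list_all2 (\<lambda>z y. z \<in> g y) u w"
proof (induction rule: list_all2_induct)
  case Nil then show ?case by auto
next
  case (Cons z u x t)
  then obtain w where "list_all2 (\<lambda>y x. y \<in> f x) w t \<and> list_all2 (\<lambda>z y. z \<in> g y) u w" by blast
  moreover obtain y where "y \<in> f x" "z \<in> g y" using Cons.hyps(1) unfolding mcomp_def by auto
  ultimately show ?case by (intro exI[of _ "y#w"]) auto
qed

lemma mcomp_multiperm:
  assumes "multiperm n f" "multiperm n g" shows "multiperm n (mcomp g f)"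
  unfolding multiperm_def
proof (intro conjI ballI allI impI)
  fix x assume x: "x \<in> {1..n}"
  then obtain y where y: "y \<in> f x" "y \<in> {1..n}" using assms(1) unfolding multiperm_def by blast
  then obtain z where "z \<in> g y" using assms(2) unfolding multiperm_def by blast
  then show "mcomp g f x \<noteq> {}" using y unfolding mcomp_def by blast
  show "mcomp g f x \<subseteq> {1..n}" using assms x unfolding multiperm_def mcomp_def by blast
next
  fix x assume "x \<notin> {1..n}"
  then show "mcomp g f x = {}" using assms unfolding multiperm_def mcomp_def by blast
next
  fix z assume z: "z \<in> {1..n}"
  then obtain y where y: "y \<in> {1..n}" "z \<in> g y" using assms(2) unfolding multiperm_def by blast
  then obtain x where "x \<in> {1..n}" "y \<in> f x" using assms(1) unfolding multiperm_def by blast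
  then show "\<exists>x\<in>{1..n}. z \<in> mcomp g f x" using y unfolding mcomp_def by blast
qed

lemma shE_DSM:
  assumes "\<forall>r\<in>G. is_rel n r"
  shows "DSM n (shE n G)"
  unfolding DSM_def
proof (intro conjI ballI allI impI)
  fix f assume "f \<in> shE n G" then show "multiperm n f" unfolding shE_def by auto
next
  have "multiperm n (mid n)" unfolding multiperm_def mid_def by auto
  moreover have "preserves (mid n) r" if "r \<in> G" for r
    unfolding preserves_def
  proof (intro ballI allI impI)
    fix t u assume t: "t \<in> snd r" and u: "list_all2 (\<lambda>y x. y \<in> mid n x) u t"
    have "set t \<subseteq> {1..n}" using t assms that unfolding is_rel_def by auto
    have "u = t" unfolding list_eq_iff_nth_eq
    proof (intro conjI allI impI)
      show "length u = length t" using u by (simp add: list_all2_lengthD)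
      fix j assume j: "j < length u"
      then have "t!j \<in> set t" using \<open>length u = length t\<close> by simp
      then have "t!j \<in> {1..n}" using \<open>set t \<subseteq> {1..n}\<close> by blast
      moreover have "u!j \<in> mid n (t!j)" using u j by (simp add: list_all2_conv_all_nth)
      ultimately show "u!j = t!j" unfolding mid_def by simp
    qed
    then show "u \<in> snd r" using t by simp
  qed
  ultimately show "mid n \<in> shE n G" unfolding shE_def by auto
next
  fix f g assume f: "f \<in> shE n G" and g: "g \<in> shE n G"
  have "preserves (mcomp g f) r" if "r \<in> G" for r
    unfolding preserves_def
  proof (intro ballI allI impI)
    fix t u assume t: "t \<in> snd r" and u: "list_all2 (\<lambda>y x. y \<in> mcomp g f x) u t"
    then obtain w where w: "list_all2 (\<lambda>y x. y \<in> f x) w t" "list_all2 (\<lambda>z y. z \<in> g y) u w"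
      using mcomp_split by blast
    have "w \<in> snd r" using f that t w(1) unfolding shE_def preserves_def by blast
    then show "u \<in> snd r" using g that w(2) unfolding shE_def preserves_def by blast
  qed
  then show "mcomp g f \<in> shE n G" using f g mcomp_multiperm unfolding shE_def by auto
next
  fix g f assume g: "g \<in> shE n G" and f: "multiperm n f \<and> (\<forall>x. f x \<subseteq> g x)"
  have "preserves f r" if "r \<in> G" for r
    unfolding preserves_def
  proof (intro ballI allI impI)
    fix t u assume t: "t \<in> snd r" and u: "list_all2 (\<lambda>y x. y \<in> f x) u t"
    have "list_all2 (\<lambda>y x. y \<in> g x) u t" using f by (intro list_all2_mono[OF u]) blast
    then show "u \<in> snd r" using g that t unfolding shE_def preserves_def by blast
  qed
  then show "f \<in> shE n G" using f unfolding shE_def by auto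
qed



lemma shE_Inv_DSM:
  assumes D: "DSM n M"
  shows "shE n (Inv n M) = M"
proof
  show "M \<subseteq> shE n (Inv n M)" using D unfolding DSM_def shE_def Inv_def by auto
next
  show "shE n (Inv n M) \<subseteq> M"
  proof
    fix f assume f: "f \<in> shE n (Inv n M)"
    have mpf: "multiperm n f" using f unfolding shE_def by auto
    have mpM: "\<forall>g\<in>M. multiperm n g" using D unfolding DSM_def by auto
    define ps where "ps = List.product [1..<Suc n] [1..<Suc n]"
    define t where "t = map fst ps"
    define R where "R = (length ps, {u. \<exists>g\<in>M. list_all2 (\<lambda>y x. y \<in> g x) u t})"
    have tn: "set t \<subseteq> {1..n}" unfolding t_def ps_def by auto
    have lt: "length t = length ps" unfolding t_def by simp
    have "is_rel n R" unfolding is_rel_def R_def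
    proof (intro ballI conjI)
      fix u assume "u \<in> snd (length ps, {u. \<exists>g\<in>M. list_all2 (\<lambda>y x. y \<in> g x) u t})"
      then obtain g where g: "g \<in> M" "list_all2 (\<lambda>y x. y \<in> g x) u t" by auto
      show "length u = fst (length ps, {u. \<exists>g\<in>M. list_all2 (\<lambda>y x. y \<in> g x) u t})"
        using g lt by (simp add: list_all2_lengthD)
      show "set u \<subseteq> {1..n}"
      proof
        fix y assume "y \<in> set u"
        then obtain j where j: "j < length u" "u!j = y" by (auto simp: in_set_conv_nth)
        have lu: "length u = length t" using g by (simp add: list_all2_lengthD)
        have "t!j \<in> {1..n}" using tn j lu nth_mem by (metis subsetD)
        moreover have "y \<in> g (t!j)" using g j by (auto simp: list_all2_conv_all_nth)
        ultimately show "y \<in> {1..n}" using mpM g unfolding multiperm_def by blast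
      qed
    qed
    moreover have "preserves h R" if h: "h \<in> M" for h
      unfolding preserves_def R_def
    proof (intro ballI allI impI)
      fix u v assume "u \<in> snd (length ps, {u. \<exists>g\<in>M. list_all2 (\<lambda>y x. y \<in> g x) u t})"
        and v: "list_all2 (\<lambda>y x. y \<in> h x) v u"
      then obtain g where g: "g \<in> M" "list_all2 (\<lambda>y x. y \<in> g x) u t" by auto
      have "list_all2 (\<lambda>y x. y \<in> mcomp h g x) v t"
        by (rule list_all2_trans[OF _ v g(2)]) (auto simp: mcomp_def)
      moreover have "mcomp h g \<in> M" using D g(1) h unfolding DSM_def by blast
      ultimately show "v \<in> snd (length ps, {u. \<exists>g\<in>M. list_all2 (\<lambda>y x. y \<in> g x) u t})" by auto
    qed
    ultimately have RI: "R \<in> Inv n M" unfolding Inv_def by auto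
    then have pf: "preserves f R" using f unfolding shE_def by auto
    have "list_all2 (\<lambda>y x. y \<in> mid n x) t t"
      using tn by (auto simp: list_all2_conv_all_nth mid_def dest!: nth_mem)
    moreover have "mid n \<in> M" using D unfolding DSM_def by blast
    ultimately have tR: "t \<in> snd R" unfolding R_def by auto
    define u where "u = map (\<lambda>(x,y). if y \<in> f x then y else (SOME z. z \<in> f x)) ps"
    have "list_all2 (\<lambda>y x. y \<in> f x) u t"
      unfolding list_all2_conv_all_nth
    proof (intro conjI allI impI)
      show "length u = length t" unfolding u_def t_def by simp
      fix j assume j: "j < length u"
      obtain x y where xy: "ps!j = (x,y)" by fastforce
      have "(x,y) \<in> set ps" using j xy unfolding u_def by (metis length_map nth_mem)
      then have "x \<in> {1..n}" unfolding ps_def by auto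
      then have "f x \<noteq> {}" using mpf unfolding multiperm_def by blast
      then have "u!j \<in> f x" using j xy unfolding u_def by (auto intro: someI_ex)
      moreover have "t!j = x" using j xy unfolding u_def t_def by simp
      ultimately show "u!j \<in> f (t!j)" by simp
    qed
    then have "u \<in> snd R" using pf tR unfolding preserves_def by blast
    then obtain g where g: "g \<in> M" "list_all2 (\<lambda>y x. y \<in> g x) u t" unfolding R_def by auto
    have "f x \<subseteq> g x" for x
    proof
      fix y assume y: "y \<in> f x"
      then have "x \<in> {1..n}" using mpf unfolding multiperm_def by blast
      moreover have "y \<in> {1..n}" using mpf y calculation unfolding multiperm_def by blast
      ultimately have "(x,y) \<in> set ps" unfolding ps_def by auto
      then obtain j where j: "j < length ps" "ps!j = (x,y)" by (auto simp: in_set_conv_nth)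
      have "u!j = y" using j y unfolding u_def by simp
      moreover have "t!j = x" using j unfolding t_def by simp
      ultimately show "y \<in> g x" using g(2) j lt by (auto simp: list_all2_conv_all_nth)
    qed
    then show "f \<in> M" using D g mpf unfolding DSM_def by blast
  qed
qed



lemma fo_def:
  assumes "fo_closed n G" "atoms_in G \<phi>" "fv \<phi> \<subseteq> set xs" "distinct xs"
  shows "(length xs, {t. length t = length xs \<and> set t \<subseteq> {1..n} \<and> sat n \<phi> (asg xs t)}) \<in> G"
proof -
  have "definable n G (length xs, {t. length t = length xs \<and> set t \<subseteq> {1..n} \<and> sat n \<phi> (asg xs t)})"
    unfolding definable_def by (intro exI[of _ \<phi>] exI[of _ xs]) (use assms in simp)
  then show ?thesis using assms(1) unfolding fo_closed_def by blast
qed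

lemma fo_def_upt:
  assumes "fo_closed n G" "atoms_in G \<phi>" "fv \<phi> \<subseteq> {0..<N}"
  shows "(N, {t. length t = N \<and> set t \<subseteq> {1..n} \<and> sat n \<phi> (asg [0..<N] t)}) \<in> G"
  using fo_def[OF assms(1,2), of "[0..<N]"] assms(3) by simp

lemma G_rel: "fo_closed n G \<Longrightarrow> (N,X) \<in> G \<Longrightarrow> X \<subseteq> {t. length t = N \<and> set t \<subseteq> {1..n}}"
  unfolding fo_closed_def is_rel_def by fastforce

lemma full_in: "fo_closed n G \<Longrightarrow> (N, {t. length t = N \<and> set t \<subseteq> {1..n}}) \<in> G"
  using fo_def_upt[of n G Top N] by simp

lemma inter_in:
  assumes fo: "fo_closed n G" and X: "(N,X) \<in> G" and Y: "(N,Y) \<in> G"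
  shows "(N, X \<inter> Y) \<in> G"
proof -
  have "(N, {t. length t = N \<and> set t \<subseteq> {1..n} \<and> sat n (Conj (Atom (N,X) [0..<N]) (Atom (N,Y) [0..<N])) (asg [0..<N] t)}) \<in> G"
    by (rule fo_def_upt[OF fo]) (use X Y in auto)
  moreover have "{t. length t = N \<and> set t \<subseteq> {1..n} \<and> sat n (Conj (Atom (N,X) [0..<N]) (Atom (N,Y) [0..<N])) (asg [0..<N] t)} = X \<inter> Y"
  proof (intro set_eqI iffI)
    fix t assume "t \<in> {t. length t = N \<and> set t \<subseteq> {1..n} \<and> sat n (Conj (Atom (N,X) [0..<N]) (Atom (N,Y) [0..<N])) (asg [0..<N] t)}"
    then have "length t = N" "map (asg [0..<N] t) [0..<N] \<in> X" "map (asg [0..<N] t) [0..<N] \<in> Y" by simp_all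
    then show "t \<in> X \<inter> Y" by (simp add: map_asg_upt)
  next
    fix t assume t: "t \<in> X \<inter> Y"
    then have "length t = N \<and> set t \<subseteq> {1..n}" using G_rel[OF fo X] by blast
    then show "t \<in> {t. length t = N \<and> set t \<subseteq> {1..n} \<and> sat n (Conj (Atom (N,X) [0..<N]) (Atom (N,Y) [0..<N])) (asg [0..<N] t)}"
      using t by (simp add: map_asg_upt)
  qed
  ultimately show ?thesis by simp
qed

lemma Inter_in:
  assumes fo: "fo_closed n G"
  shows "finite F \<Longrightarrow> F \<noteq> {} \<Longrightarrow> \<forall>X\<in>F. (N,X) \<in> G \<Longrightarrow> (N, \<Inter>F) \<in> G"
proof (induction F rule: finite_ne_induct)
  case (singleton x) then show ?case by simp
next
  case (insert x F) then show ?case using inter_in[OF fo] by simp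
qed

definition Tc :: "rel set \<Rightarrow> nat \<Rightarrow> nat list \<Rightarrow> rel" where
  "Tc G N src = (N, \<Inter>{X. (N,X) \<in> G \<and> src \<in> X})"

lemma Tc_in:
  assumes fo: "fo_closed n G" and src: "length src = N" "set src \<subseteq> {1..n}"
  shows "Tc G N src \<in> G"
  unfolding Tc_def
proof (rule Inter_in[OF fo])
  let ?X0 = "{t. length t = N \<and> set t \<subseteq> {1..n}}"
  have "finite ?X0" using finite_lists_length_eq[of "{1..n}" N] by (simp add: conj_commute)
  moreover have "{X. (N,X) \<in> G \<and> src \<in> X} \<subseteq> Pow ?X0" using G_rel[OF fo] by blast
  ultimately show "finite {X. (N,X) \<in> G \<and> src \<in> X}" by (metis (no_types, lifting) finite_Pow_iff finite_subset)
  have "?X0 \<in> {X. (N,X) \<in> G \<and> src \<in> X}" using full_in[OF fo] src by auto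
  then show "{X. (N,X) \<in> G \<and> src \<in> X} \<noteq> {}" by blast
qed auto

lemma Tc_self: "src \<in> snd (Tc G N src)"
  unfolding Tc_def by auto

definition fuc :: "nat \<Rightarrow> nat \<Rightarrow> nat list \<Rightarrow> nat list \<Rightarrow> nat \<Rightarrow> nat set" where
  "fuc n N src u = (\<lambda>x. if x \<in> {1..n} then {u!p | p. p < N \<and> src!p = x} else {})"

lemma L1:
  assumes fo: "fo_closed n G" and src: "length src = N" "set src \<subseteq> {1..n}"
    and u: "u \<in> snd (Tc G N src)" and S: "S \<in> G"
  shows "preserves (fuc n N src u) S"
  unfolding preserves_def
proof (intro ballI allI impI)
  fix s s' assume s: "s \<in> snd S" and s': "list_all2 (\<lambda>y x. y \<in> fuc n N src u x) s' s"
  have isr: "is_rel n S" using fo S unfolding fo_closed_def by blast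
  have ls: "length s' = length s" using s' by (simp add: list_all2_lengthD)
  have "\<forall>j<length s. \<exists>p. p < N \<and> src!p = s!j \<and> u!p = s'!j"
  proof (intro allI impI)
    fix j assume j: "j < length s"
    have "s'!j \<in> fuc n N src u (s!j)" using s' j by (simp add: list_all2_conv_all_nth)
    then show "\<exists>p. p < N \<and> src!p = s!j \<and> u!p = s'!j" unfolding fuc_def by (auto split: if_splits)
  qed
  then have "\<forall>j. \<exists>p. j < length s \<longrightarrow> p < N \<and> src!p = s!j \<and> u!p = s'!j" by blast
  then have "\<exists>P. \<forall>j. j < length s \<longrightarrow> P j < N \<and> src!(P j) = s!j \<and> u!(P j) = s'!j"
    by (rule choice)
  then obtain P where P: "\<forall>j. j < length s \<longrightarrow> P j < N \<and> src!(P j) = s!j \<and> u!(P j) = s'!j"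
    by blast
  define ps where "ps = map P [0..<length s]"
  define Y where "Y = {t. length t = N \<and> set t \<subseteq> {1..n} \<and> sat n (Atom S ps) (asg [0..<N] t)}"
  have lS: "length s = fst S" using isr s unfolding is_rel_def by blast
  have lps: "length ps = length s" by (simp add: ps_def)
  have psj: "\<And>j. j < length s \<Longrightarrow> ps ! j = P j" by (simp add: ps_def)
  have YG: "(N, Y) \<in> G" unfolding Y_def
  proof (rule fo_def_upt[OF fo])
    have "length ps = fst S" using lS lps by simp
    then show "atoms_in G (Atom S ps)" using S by simp
    show "fv (Atom S ps) \<subseteq> {0..<N}"
    proof
      fix v assume "v \<in> fv (Atom S ps)"
      then obtain j where "j < length s" "v = P j" unfolding ps_def by auto
      then show "v \<in> {0..<N}" using P by simp
    qed
  qed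
  have mapeq: "map (asg [0..<N] t) ps = map (nth t) ps" if "length t = N" for t
  proof (rule map_cong[OF refl])
    fix p assume "p \<in> set ps"
    then obtain j where "j < length s" "p = P j" unfolding ps_def by auto
    then have "p < N" using P by simp
    then show "asg [0..<N] t p = t ! p" using asg_upt[OF that] by simp
  qed
  have "map (nth src) ps = s"
  proof (rule nth_equalityI)
    show "length (map (nth src) ps) = length s" using lps by simp
    fix j assume "j < length (map (nth src) ps)"
    then have j: "j < length s" using lps by simp
    then show "map (nth src) ps ! j = s ! j" using psj[OF j] P lps by simp
  qed
  then have "src \<in> Y" unfolding Y_def using src s mapeq[OF src(1)] by simp
  then have "u \<in> Y" using u YG unfolding Tc_def by auto
  then have uY: "map (asg [0..<N] u) ps \<in> snd S" and lu: "length u = N" unfolding Y_def by auto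
  have "map (nth u) ps = s'"
  proof (rule nth_equalityI)
    show "length (map (nth u) ps) = length s'" using lps ls by simp
    fix j assume "j < length (map (nth u) ps)"
    then have j: "j < length s" using lps by simp
    then show "map (nth u) ps ! j = s' ! j" using psj[OF j] P lps by simp
  qed
  then show "s' \<in> snd S" using uY mapeq[OF lu] by simp
qed



lemma upd_map3:
  assumes "length w = i" "length z = n" "length r = n"
  shows "map (upd_list (upd_list (asg [0..<i] w) [i..<i+n] z) [i+n..<i+n+n] r) [0..<i+n+n] = w @ z @ r"
proof -
  let ?s1 = "upd_list (asg [0..<i] w) [i..<i+n] z"
  let ?s2 = "upd_list ?s1 [i+n..<i+n+n] r"
  have split: "[0..<i+n+n] = [0..<i] @ [i..<i+n] @ [i+n..<i+n+n]"
  proof -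
    have "[0..<i+n+n] = [0..<i] @ [i..<i+n+n]" using upt_add_eq_append[of 0 i "n+n"] by (simp add: add.assoc)
    moreover have "[i..<i+n+n] = [i..<i+n] @ [i+n..<i+n+n]" using upt_add_eq_append[of i "i+n" n] by simp
    ultimately show ?thesis by simp
  qed
  have "map ?s2 [i+n..<i+n+n] = r" using assms by (simp add: upd_list_map)
  moreover have "map ?s2 [i..<i+n] = map ?s1 [i..<i+n]"
    by (rule map_cong[OF refl]) (simp add: upd_list_out)
  moreover have "map ?s1 [i..<i+n] = z" using assms by (simp add: upd_list_map)
  moreover have "map ?s2 [0..<i] = map (asg [0..<i] w) [0..<i]"
    by (rule map_cong[OF refl]) (simp add: upd_list_out)
  moreover have "map (asg [0..<i] w) [0..<i] = w" using assms by (simp add: map_asg_upt)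
  ultimately show ?thesis using split by simp
qed

lemma Inv_shE_closed:
  assumes fo: "fo_closed n G"
  shows "Inv n (shE n G) = G"
proof
  show "G \<subseteq> Inv n (shE n G)" using fo unfolding fo_closed_def Inv_def shE_def by blast
next
  show "Inv n (shE n G) \<subseteq> G"
  proof
    fix rr assume rr: "rr \<in> Inv n (shE n G)"
    obtain i R where rrd: "rr = (i, R)" by fastforce
    have isr: "is_rel n rr" using rr unfolding Inv_def by auto
    then have Rsub: "R \<subseteq> {t. set t \<subseteq> {1..n} \<and> length t = i}" unfolding is_rel_def rrd by auto
    have "finite R" by (rule finite_subset[OF Rsub finite_lists_length_eq]) simp
    then obtain as where as: "set as = R" using finite_list by blast
    define ids where "ids = [1..<Suc n]"
    define N where "N = i + n + n"
    define zv where "zv = [i..<i+n]"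
    define rv where "rv = [i+n..<i+n+n]"
    define gs where "gs = List.n_lists n ids"
    have "set [1..<Suc n] = {1..n}" by auto
    then have gs_set: "set gs = {g. length g = n \<and> set g \<subseteq> {1..n}}" unfolding gs_def ids_def
      by (simp add: set_n_lists)
    have ids: "length ids = n" "set ids = {1..n}" unfolding ids_def by auto
    define \<Phi> where "\<Phi> = bigOr (map (\<lambda>a. foldr All zv (bigOr (map (\<lambda>g. foldr Ex rv (Atom (Tc G N (a@g@ids)) [0..<N])) gs))) as)"
    have srcok: "length (a@g@ids) = N \<and> set (a@g@ids) \<subseteq> {1..n}" if "a \<in> R" "g \<in> set gs" for a g
      using that Rsub gs_set ids unfolding N_def by auto
    have sat\<Phi>: "sat n \<Phi> s \<longleftrightarrow> (\<exists>a\<in>R. \<forall>z. length z = n \<and> set z \<subseteq> {1..n} \<longrightarrow>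
        (\<exists>g\<in>set gs. \<exists>r. length r = n \<and> set r \<subseteq> {1..n} \<and>
           map (upd_list (upd_list s zv z) rv r) [0..<N] \<in> snd (Tc G N (a@g@ids))))" for s
      unfolding \<Phi>_def by (simp add: sat_bigOr sat_Alls sat_Exs as zv_def rv_def)
    have "definable n G rr"
      unfolding definable_def
    proof (intro exI conjI)
      show "distinct [0..<i]" by simp
      show "length [0..<i] = fst rr" using rrd by simp
      show "fv \<Phi> \<subseteq> set [0..<i]"
        unfolding \<Phi>_def by (auto simp: fv_bigOr fv_Alls fv_Exs zv_def rv_def N_def)
      show "atoms_in G \<Phi>"
      proof -
        have "\<forall>a\<in>R. \<forall>g\<in>set gs. Tc G N (a@g@ids) \<in> G" using Tc_in[OF fo] srcok by blast
        moreover have "\<And>src. fst (Tc G N src) = N" unfolding Tc_def by simp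
        ultimately show ?thesis unfolding \<Phi>_def by (auto simp: atoms_bigOr atoms_Alls atoms_Exs as)
      qed
      show "snd rr = {t. length t = length [0..<i] \<and> set t \<subseteq> {1..n} \<and> sat n \<Phi> (asg [0..<i] t)}"
      proof (intro set_eqI iffI)
        fix w assume "w \<in> snd rr"
        then have w: "w \<in> R" using rrd by simp
        then have lw: "length w = i" "set w \<subseteq> {1..n}" using Rsub by auto
        have "sat n \<Phi> (asg [0..<i] w)"
          unfolding sat\<Phi>
        proof (intro bexI[OF _ w] allI impI)
          fix z assume z: "length z = n \<and> set z \<subseteq> {1..n}"
          then have zg: "z \<in> set gs" using gs_set by auto
          have "map (upd_list (upd_list (asg [0..<i] w) zv z) rv ids) [0..<N] = w @ z @ ids"
            unfolding zv_def rv_def N_def using z by (intro upd_map3[OF lw(1) _ ids(1)]) simp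
          then show "\<exists>g\<in>set gs. \<exists>r. length r = n \<and> set r \<subseteq> {1..n} \<and>
             map (upd_list (upd_list (asg [0..<i] w) zv z) rv r) [0..<N] \<in> snd (Tc G N (w@g@ids))"
            using zg ids Tc_self by (intro bexI[OF _ zg] exI[of _ ids]) auto
        qed
        then show "w \<in> {t. length t = length [0..<i] \<and> set t \<subseteq> {1..n} \<and> sat n \<Phi> (asg [0..<i] t)}"
          using lw by simp
      next
        fix w assume "w \<in> {t. length t = length [0..<i] \<and> set t \<subseteq> {1..n} \<and> sat n \<Phi> (asg [0..<i] t)}"
        then have lw: "length w = i" "set w \<subseteq> {1..n}" and sw: "sat n \<Phi> (asg [0..<i] w)" by auto
        obtain a where a: "a \<in> R" and ha: "\<forall>z. length z = n \<and> set z \<subseteq> {1..n} \<longrightarrow>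
          (\<exists>g\<in>set gs. \<exists>r. length r = n \<and> set r \<subseteq> {1..n} \<and>
           map (upd_list (upd_list (asg [0..<i] w) zv z) rv r) [0..<N] \<in> snd (Tc G N (a@g@ids)))"
          using sw unfolding sat\<Phi> by blast
        obtain g r where g: "g \<in> set gs" and r: "length r = n" "set r \<subseteq> {1..n}"
          and m: "map (upd_list (upd_list (asg [0..<i] w) zv ids) rv r) [0..<N] \<in> snd (Tc G N (a@g@ids))"
        proof -
          have "length ids = n \<and> set ids \<subseteq> {1..n}" using ids by simp
          then have "\<exists>g\<in>set gs. \<exists>r. length r = n \<and> set r \<subseteq> {1..n} \<and>
           map (upd_list (upd_list (asg [0..<i] w) zv ids) rv r) [0..<N] \<in> snd (Tc G N (a@g@ids))"
            using ha by blast
          then show ?thesis using that by blast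
        qed
        define u where "u = w @ ids @ r"
        define src where "src = a @ g @ ids"
        have eq: "map (upd_list (upd_list (asg [0..<i] w) zv ids) rv r) [0..<N] = u"
          unfolding u_def zv_def rv_def N_def by (rule upd_map3[OF lw(1) ids(1) r(1)])
        have uT: "u \<in> snd (Tc G N src)"
          using m unfolding eq src_def .
        have la: "length a = i" "set a \<subseteq> {1..n}" using a Rsub by auto
        have lg: "length g = n" "set g \<subseteq> {1..n}" using g gs_set by auto
        have src: "length src = N" "set src \<subseteq> {1..n}" using srcok[OF a g] unfolding src_def by auto
        have lu: "length u = N" "set u \<subseteq> {1..n}" using lw r ids unfolding u_def N_def by auto
        let ?f = "fuc n N src u"
        have mp: "multiperm n ?f"
          unfolding multiperm_def
        proof (intro conjI ballI allI impI)
          fix x assume x: "x \<in> {1..n}"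
          let ?p = "i + n + (x - 1)"
          have "src ! ?p = (a @ g @ ids) ! (length a + (length g + (x - 1)))"
            using la lg unfolding src_def by (simp add: add.assoc)
          also have "\<dots> = ids ! (x - 1)" by (simp only: nth_append_length_plus)
          also have "\<dots> = x" using x unfolding ids_def by (simp add: nth_upt del: upt_Suc)
          finally have "src ! ?p = x" .
          moreover have "?p < N" using x unfolding N_def by auto
          ultimately show "?f x \<noteq> {}" using x unfolding fuc_def by auto
          show "?f x \<subseteq> {1..n}"
          proof
            fix y assume "y \<in> ?f x"
            then obtain p where p: "p < N" "y = u ! p" using x unfolding fuc_def by auto
            then have "y \<in> set u" using lu(1) by simp
            then show "y \<in> {1..n}" using lu(2) by blast
          qed
        next
          fix x assume "x \<notin> {1..n}" then show "?f x = {}" unfolding fuc_def by auto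
        next
          fix y assume y: "y \<in> {1..n}"
          let ?p = "i + (y - 1)"
          have "u ! ?p = (w @ ids @ r) ! (length w + (y - 1))" using lw unfolding u_def by simp
          also have "\<dots> = (ids @ r) ! (y - 1)" by (simp only: nth_append_length_plus)
          also have "\<dots> = ids ! (y - 1)"
          proof -
            have "y - 1 < length ids" using y ids by auto
            then show ?thesis by (simp add: nth_append)
          qed
          also have "\<dots> = y" using y unfolding ids_def by (simp add: nth_upt del: upt_Suc)
          finally have "u ! ?p = y" .
          have "src ! ?p = (a @ g @ ids) ! (length a + (y - 1))" using la unfolding src_def by simp
          also have "\<dots> = (g @ ids) ! (y - 1)" by (simp only: nth_append_length_plus)
          also have "\<dots> = g ! (y - 1)"
          proof -
            have "y - 1 < length g" using y lg by auto
            then show ?thesis by (simp add: nth_append)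
          qed
          finally have "src ! ?p = g ! (y - 1)" .
          note \<open>u ! ?p = y\<close> this
          moreover have "g ! (y - 1) \<in> {1..n}"
          proof -
            have "y - 1 < length g" using y lg by auto
            then have "g ! (y - 1) \<in> set g" by (rule nth_mem)
            then show ?thesis using lg by blast
          qed
          moreover have "?p < N" using y unfolding N_def by auto
          ultimately show "\<exists>x\<in>{1..n}. y \<in> ?f x" unfolding fuc_def
            by (intro bexI[of _ "g ! (y - 1)"]) (auto intro!: exI[of _ ?p])
        qed
        have "?f \<in> shE n G" unfolding shE_def using mp L1[OF fo src uT] by blast
        then have pf: "preserves ?f rr" using rr unfolding Inv_def by blast
        have "list_all2 (\<lambda>y x. y \<in> ?f x) w a"
          unfolding list_all2_conv_all_nth
        proof (intro conjI allI impI)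
          show "length w = length a" using lw la by simp
          fix j assume j: "j < length w"
          have "a ! j \<in> set a" using j lw la by simp
          then have "a ! j \<in> {1..n}" using la by blast
          moreover have "u ! j = w ! j" using j unfolding u_def by (simp add: nth_append)
          moreover have "src ! j = a ! j" using j lw la unfolding src_def by (simp add: nth_append)
          moreover have "j < N" using j lw unfolding N_def by simp
          ultimately show "w ! j \<in> ?f (a ! j)" unfolding fuc_def by (auto intro!: exI[of _ j])
        qed
        moreover have "a \<in> snd rr" using a rrd by simp
        ultimately show "w \<in> snd rr" using pf unfolding preserves_def by blast
      qed
    qed
    then show "rr \<in> G" using fo unfolding fo_closed_def by blast
  qed
qed


theorem corollary2p6:
  fixes n :: nat
  assumes "n \<ge> 1"
  shows "bij_betw (Inv n) {M. DSM n M} {G. fo_closed n G}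
       \<and> bij_betw (shE n) {G. fo_closed n G} {M. DSM n M}
       \<and> (\<forall>M. DSM n M \<longrightarrow> shE n (Inv n M) = M)
       \<and> (\<forall>G. fo_closed n G \<longrightarrow> Inv n (shE n G) = G)
       \<and> (\<forall>M1 M2. DSM n M1 \<and> DSM n M2 \<longrightarrow> (M1 \<subseteq> M2 \<longleftrightarrow> Inv n M2 \<subseteq> Inv n M1))
       \<and> (\<forall>G1 G2. fo_closed n G1 \<and> fo_closed n G2 \<longrightarrow> (G1 \<subseteq> G2 \<longleftrightarrow> shE n G2 \<subseteq> shE n G1))"
proof -
  have A: "\<And>M. DSM n M \<Longrightarrow> shE n (Inv n M) = M" by (rule shE_Inv_DSM)
  have B: "\<And>G. fo_closed n G \<Longrightarrow> Inv n (shE n G) = G" by (rule Inv_shE_closed)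
  have C: "\<And>M. DSM n M \<Longrightarrow> fo_closed n (Inv n M)"
    by (rule Inv_fo_closed) (simp add: DSM_def)
  have D: "\<And>G. fo_closed n G \<Longrightarrow> DSM n (shE n G)"
    by (rule shE_DSM) (simp add: fo_closed_def)
  have InvA: "\<And>M1 M2. M1 \<subseteq> M2 \<Longrightarrow> Inv n M2 \<subseteq> Inv n M1" unfolding Inv_def by blast
  have shEA: "\<And>G1 G2. G1 \<subseteq> G2 \<Longrightarrow> shE n G2 \<subseteq> shE n G1" unfolding shE_def by blast
  have b1: "bij_betw (Inv n) {M. DSM n M} {G. fo_closed n G}"
    unfolding bij_betw_def
  proof
    show "inj_on (Inv n) {M. DSM n M}" by (rule inj_onI) (metis A mem_Collect_eq)
    show "Inv n ` {M. DSM n M} = {G. fo_closed n G}"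
    proof
      show "Inv n ` {M. DSM n M} \<subseteq> {G. fo_closed n G}" using C by blast
      show "{G. fo_closed n G} \<subseteq> Inv n ` {M. DSM n M}"
      proof
        fix G assume "G \<in> {G. fo_closed n G}"
        then have "fo_closed n G" by simp
        then show "G \<in> Inv n ` {M. DSM n M}" using B D by (metis image_eqI mem_Collect_eq)
      qed
    qed
  qed
  have b2: "bij_betw (shE n) {G. fo_closed n G} {M. DSM n M}"
    unfolding bij_betw_def
  proof
    show "inj_on (shE n) {G. fo_closed n G}" by (rule inj_onI) (metis B mem_Collect_eq)
    show "shE n ` {G. fo_closed n G} = {M. DSM n M}"
    proof
      show "shE n ` {G. fo_closed n G} \<subseteq> {M. DSM n M}" using D by blast
      show "{M. DSM n M} \<subseteq> shE n ` {G. fo_closed n G}"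
      proof
        fix M assume "M \<in> {M. DSM n M}"
        then have "DSM n M" by simp
        then show "M \<in> shE n ` {G. fo_closed n G}" using A C by (metis image_eqI mem_Collect_eq)
      qed
    qed
  qed
  have o1: "\<forall>M1 M2. DSM n M1 \<and> DSM n M2 \<longrightarrow> (M1 \<subseteq> M2 \<longleftrightarrow> Inv n M2 \<subseteq> Inv n M1)"
  proof (intro allI impI iffI)
    fix M1 M2 assume "DSM n M1 \<and> DSM n M2" "Inv n M2 \<subseteq> Inv n M1"
    then show "M1 \<subseteq> M2" using shEA[of "Inv n M2" "Inv n M1"] A by metis
  qed (rule InvA)
  have o2: "\<forall>G1 G2. fo_closed n G1 \<and> fo_closed n G2 \<longrightarrow> (G1 \<subseteq> G2 \<longleftrightarrow> shE n G2 \<subseteq> shE n G1)"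
  proof (intro allI impI iffI)
    fix G1 G2 assume "fo_closed n G1 \<and> fo_closed n G2" "shE n G2 \<subseteq> shE n G1"
    then show "G1 \<subseteq> G2" using InvA[of "shE n G2" "shE n G1"] B by metis
  qed (rule shEA)
  show ?thesis using b1 b2 o1 o2 A B by blast
qed

end
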